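(* Let $3\le k\le n-1$ and let $T$ be a tree attaining the maximum value of $M_2$ over $\mathcal{CT}_{n,k}$. If the maximum degree of $T$ is $4$, then the subgraph of $T$ induced by the vertices of degree $4$ is a tree.
   Context: A chemical tree is a tree with maximum degree at most $4$. A segment of a tree is a path of positive length neither of whose end vertices has degree $2$ and all of whose internal vertices have degree $2$. $\mathcal{CT}_{n,k}$ is the class of all $n$-vertex chemical trees with exactly $k$ segments. $M_2(G)=\sum_{uv\in E(G)}d_ud_v$, where $d_v$ is the degree of $v$. *)

theory Defs
  imports Main
begin

definition simple_graph :: "'a set \<Rightarrow> 'a set set \<Rightarrow> bool" where
  "simple_graph V E \<longleftrightarrow> finite V \<and> (\<forall>e\<in>E. \<exists>u v. e = {u, v} \<and> u \<noteq> v \<and> u \<in> V \<and> v \<in> V)"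

definition deg :: "'a set \<Rightarrow> 'a set set \<Rightarrow> 'a \<Rightarrow> nat" where
  "deg V E v = card {u \<in> V. {u, v} \<in> E}"

definition max_degree :: "'a set \<Rightarrow> 'a set set \<Rightarrow> nat" where
  "max_degree V E = Max (deg V E ` V)"

definition connected_graph :: "'a set \<Rightarrow> 'a set set \<Rightarrow> bool" where
  "connected_graph V E \<longleftrightarrow>
     (\<forall>u\<in>V. \<forall>v\<in>V. (u, v) \<in> {(x, y). {x, y} \<in> E}\<^sup>*)"

definition is_path :: "'a set \<Rightarrow> 'a set set \<Rightarrow> 'a list \<Rightarrow> bool" where
  "is_path V E p \<longleftrightarrow> p \<noteq> [] \<and> distinct p \<and> set p \<subseteq> V \<and>
     (\<forall>i. Suc i < length p \<longrightarrow> {p ! i, p ! Suc i} \<in> E)"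

definition is_cycle :: "'a set \<Rightarrow> 'a set set \<Rightarrow> 'a list \<Rightarrow> bool" where
  "is_cycle V E c \<longleftrightarrow> is_path V E c \<and> length c \<ge> 3 \<and> {last c, hd c} \<in> E"

definition acyclic_graph :: "'a set \<Rightarrow> 'a set set \<Rightarrow> bool" where
  "acyclic_graph V E \<longleftrightarrow> \<not> (\<exists>c. is_cycle V E c)"

definition is_tree :: "'a set \<Rightarrow> 'a set set \<Rightarrow> bool" where
  "is_tree V E \<longleftrightarrow> simple_graph V E \<and> V \<noteq> {} \<and> connected_graph V E \<and> acyclic_graph V E"

definition chemical_tree :: "'a set \<Rightarrow> 'a set set \<Rightarrow> bool" where
  "chemical_tree V E \<longleftrightarrow> is_tree V E \<and> (\<forall>v\<in>V. deg V E v \<le> 4)"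

definition path_edges :: "'a list \<Rightarrow> 'a set set" where
  "path_edges p = {{p ! i, p ! Suc i} | i. Suc i < length p}"

definition is_segment :: "'a set \<Rightarrow> 'a set set \<Rightarrow> 'a list \<Rightarrow> bool" where
  "is_segment V E p \<longleftrightarrow> is_path V E p \<and> length p \<ge> 2 \<and>
     deg V E (hd p) \<noteq> 2 \<and> deg V E (last p) \<noteq> 2 \<and>
     (\<forall>i. 0 < i \<and> i < length p - 1 \<longrightarrow> deg V E (p ! i) = 2)"

text \<open>Segments as subgraphs (a path and its reversal give the same segment).\<close>
definition segments :: "'a set \<Rightarrow> 'a set set \<Rightarrow> 'a set set set" where
  "segments V E = {path_edges p | p. is_segment V E p}"

definition num_segments :: "'a set \<Rightarrow> 'a set set \<Rightarrow> nat" where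
  "num_segments V E = card (segments V E)"

text \<open>CT_{n,k}: chemical trees on n vertices with exactly k segments
  (vertices taken from nat; the class is closed under isomorphism).\<close>
definition CT :: "nat \<Rightarrow> nat \<Rightarrow> (nat set \<times> nat set set) set" where
  "CT n k = {(V, E). chemical_tree V E \<and> card V = n \<and> num_segments V E = k}"

definition M2 :: "'a set \<Rightarrow> 'a set set \<Rightarrow> nat" where
  "M2 V E = (\<Sum>e\<in>E. \<Prod>v\<in>e. deg V E v)"

end

theory Submission
  imports Defs
begin


definition rel :: "'a set set \<Rightarrow> ('a \<times> 'a) set" where
  "rel G = {(x, y). {x, y} \<in> G}"

lemma rel_sym_step: "(x, y) \<in> rel G \<Longrightarrow> (y, x) \<in> rel G"
  by (auto simp: rel_def insert_commute)

lemma conn_sym: "(x, y) \<in> (rel G)\<^sup>* \<Longrightarrow> (y, x) \<in> (rel G)\<^sup>*"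
proof (induction rule: rtrancl_induct)
  case base then show ?case by simp
next
  case (step y z)
  then show ?case by (meson converse_rtrancl_into_rtrancl rel_sym_step)
qed

lemma conn_mono: "G \<subseteq> H \<Longrightarrow> (x, y) \<in> (rel G)\<^sup>* \<Longrightarrow> (x, y) \<in> (rel H)\<^sup>*"
proof -
  assume a: "G \<subseteq> H" "(x, y) \<in> (rel G)\<^sup>*"
  have "rel G \<subseteq> rel H" using a(1) by (auto simp: rel_def)
  then show ?thesis using a(2) rtrancl_mono by blast
qed

lemma conn_sim:
  assumes "\<And>p q. {p, q} \<in> G \<Longrightarrow> (p, q) \<in> (rel H)\<^sup>*"
    and "(x, y) \<in> (rel G)\<^sup>*"
  shows "(x, y) \<in> (rel H)\<^sup>*"
proof -
  have "rel G \<subseteq> (rel H)\<^sup>*" using assms(1) by (auto simp: rel_def)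
  then have "(rel G)\<^sup>* \<subseteq> (rel H)\<^sup>*" by (simp add: rtrancl_subset_rtrancl)
  then show ?thesis using assms(2) by auto
qed

lemma path_conn:
  assumes "\<And>k. i \<le> k \<Longrightarrow> k < j \<Longrightarrow> {p ! k, p ! Suc k} \<in> G" and "i \<le> j"
  shows "(p ! i, p ! j) \<in> (rel G)\<^sup>*"
  using assms
proof (induction j)
  case 0 then show ?case by simp
next
  case (Suc j)
  show ?case
  proof (cases "i = Suc j")
    case True then show ?thesis by simp
  next
    case False
    then have "(p ! i, p ! j) \<in> (rel G)\<^sup>*" using Suc by auto
    moreover have "(p ! j, p ! Suc j) \<in> rel G" using Suc.prems False by (auto simp: rel_def)
    ultimately show ?thesis by (rule rtrancl_into_rtrancl)
  qed
qed

lemma is_path_mono: "is_path V G p \<Longrightarrow> G \<subseteq> H \<Longrightarrow> V \<subseteq> W \<Longrightarrow> is_path W H p"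
  unfolding is_path_def by auto

lemma acyclic_mono: "acyclic_graph V H \<Longrightarrow> G \<subseteq> H \<Longrightarrow> acyclic_graph V G"
  unfolding acyclic_graph_def is_cycle_def using is_path_mono by blast

lemma simple_edge: "simple_graph V E \<Longrightarrow> {x, y} \<in> E \<Longrightarrow> x \<noteq> y \<and> x \<in> V \<and> y \<in> V"
  unfolding simple_graph_def by (metis doubleton_eq_iff)

lemma path_length: "is_path V E p \<Longrightarrow> finite V \<Longrightarrow> length p \<le> card V"
  unfolding is_path_def by (metis card_mono distinct_card)

lemma path_take: "is_path V E p \<Longrightarrow> i < length p \<Longrightarrow> is_path V E (take (Suc i) p)"
  unfolding is_path_def
  apply (intro conjI)
     apply (cases p; simp)
    apply simp
   apply (meson order_trans set_take_subset)
  apply simp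
  done

lemma path_drop: "is_path V E p \<Longrightarrow> j < length p \<Longrightarrow> is_path V E (drop j p)"
  unfolding is_path_def
  apply (intro conjI)
     apply simp
    apply simp
   apply (meson order_trans set_drop_subset)
  apply (simp add: add.commute)
  done

lemma path_snoc: "is_path V E p \<Longrightarrow> t \<notin> set p \<Longrightarrow> t \<in> V \<Longrightarrow> {last p, t} \<in> E \<Longrightarrow> is_path V E (p @ [t])"
  unfolding is_path_def
proof (intro conjI allI impI)
  fix i assume a: "p \<noteq> [] \<and> distinct p \<and> set p \<subseteq> V \<and> (\<forall>i. Suc i < length p \<longrightarrow> {p ! i, p ! Suc i} \<in> E)"
    "t \<notin> set p" "t \<in> V" "{last p, t} \<in> E" "Suc i < length (p @ [t])"
  show "{(p @ [t]) ! i, (p @ [t]) ! Suc i} \<in> E"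
  proof (cases "Suc i < length p")
    case True then show ?thesis using a by (simp add: nth_append)
  next
    case False
    then have "i = length p - 1" using a by simp
    then show ?thesis using a by (simp add: nth_append last_conv_nth)
  qed
qed auto

lemma walk_to_path:
  assumes sg: "simple_graph V E" and "x \<in> V" and "(x, z) \<in> (rel E)\<^sup>*"
  shows "\<exists>p. is_path V E p \<and> hd p = x \<and> last p = z"
  using assms(3)
proof (induction rule: rtrancl_induct)
  case base
  then show ?case using assms(2) by (intro exI[of _ "[x]"]) (auto simp: is_path_def)
next
  case (step w z)
  then obtain p where p: "is_path V E p" "hd p = x" "last p = w" by blast
  have e: "{w, z} \<in> E" using step(2) by (auto simp: rel_def)
  show ?case
  proof (cases "z \<in> set p")
    case True
    then obtain i where i: "i < length p" "p ! i = z" by (metis in_set_conv_nth)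
    have "is_path V E (take (Suc i) p)" using path_take p i by blast
    moreover have "hd (take (Suc i) p) = x" using p i
      by (metis hd_take is_path_def zero_less_Suc)
    moreover have "last (take (Suc i) p) = z" using i
      by (metis last_snoc take_Suc_conv_app_nth)
    ultimately show ?thesis by blast
  next
    case False
    have "is_path V E (p @ [z])" using path_snoc p False e simple_edge[OF sg e] by auto
    then show ?thesis using p by (intro exI[of _ "p @ [z]"]) (auto simp: is_path_def)
  qed
qed



lemma acyclic_edge:
  assumes sg: "simple_graph V E" and ac: "acyclic_graph V E" and e: "{x, y} \<in> E"
  shows "(x, y) \<notin> (rel (E - {{x, y}}))\<^sup>*"
proof
  assume c: "(x, y) \<in> (rel (E - {{x, y}}))\<^sup>*"
  have sg': "simple_graph V (E - {{x, y}})" using sg unfolding simple_graph_def by auto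
  have xy: "x \<noteq> y" "x \<in> V" "y \<in> V" using simple_edge[OF sg e] by auto
  obtain p where p: "is_path V (E - {{x, y}}) p" "hd p = x" "last p = y"
    using walk_to_path[OF sg' xy(2) c] by blast
  have ne: "p \<noteq> []" using p(1) by (simp add: is_path_def)
  have "length p \<noteq> 1"
  proof
    assume "length p = 1"
    then obtain z where "p = [z]" by (metis One_nat_def length_0_conv length_Suc_conv)
    then show False using p xy by simp
  qed
  moreover have "length p \<noteq> 2"
  proof
    assume "length p = 2"
    then obtain z w where zw: "p = [z, w]"
      by (metis One_nat_def Suc_1 length_0_conv length_Suc_conv)
    then have "{p ! 0, p ! Suc 0} \<in> E - {{x, y}}" using p(1) unfolding is_path_def
      by simp
    then have "{z, w} \<in> E - {{x, y}}" using zw by simp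
    then show False using zw p by simp
  qed
  moreover have "length p \<noteq> 0" using ne by simp
  ultimately have "length p \<ge> 3" by arith
  moreover have "is_path V E p" using p(1) is_path_mono by blast
  moreover have "{last p, hd p} \<in> E" using p e by (simp add: insert_commute)
  ultimately have "is_cycle V E p" unfolding is_cycle_def by simp
  then show False using ac unfolding acyclic_graph_def by blast
qed

lemma add_edge_acyclic:
  assumes ac: "acyclic_graph V G" and nc: "(x, y) \<notin> (rel G)\<^sup>*"
  shows "acyclic_graph V (insert {x, y} G)"
  unfolding acyclic_graph_def
proof
  assume "\<exists>c. is_cycle V (insert {x, y} G) c"
  then obtain c where c: "is_cycle V (insert {x, y} G) c" by blast
  define L where "L = length c"
  have L3: "L \<ge> 3" using c by (simp add: is_cycle_def L_def)
  have dist: "distinct c" using c by (simp add: is_cycle_def is_path_def)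
  have cp: "is_path V (insert {x, y} G) c" using c by (simp add: is_cycle_def)
  have cne: "c \<noteq> []" using cp by (simp add: is_path_def)
  have lh: "last c = c ! (L - 1)" "hd c = c ! 0" using cne unfolding L_def
    by (simp add: last_conv_nth, simp add: hd_conv_nth)
  have cl: "{c ! (L - 1), c ! 0} \<in> insert {x, y} G"
    using c lh unfolding is_cycle_def by simp
  have ed: "{c ! k, c ! Suc k} \<in> insert {x, y} G" if "Suc k < L" for k
    using cp that unfolding is_path_def L_def by simp
  have neq: "c ! i = c ! j \<longleftrightarrow> i = j" if "i < L" "j < L" for i j
    using nth_eq_iff_index_eq[OF dist] that unfolding L_def by blast
  have nc': "(y, x) \<notin> (rel G)\<^sup>*"
  proof
    assume "(y, x) \<in> (rel G)\<^sup>*"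
    then have "(x, y) \<in> (rel G)\<^sup>*" by (rule conn_sym)
    with nc show False by simp
  qed
  show False
  proof (cases "{c ! (L - 1), c ! 0} = {x, y}")
    case True
    have "\<And>k. 0 \<le> k \<Longrightarrow> k < L - 1 \<Longrightarrow> {c ! k, c ! Suc k} \<in> G"
    proof -
      fix k assume k: "0 \<le> k" "k < L - 1"
      have n1: "c ! k \<noteq> c ! (L - 1)" using neq[of k "L - 1"] k L3 by simp
      have n2: "c ! Suc k \<noteq> c ! (L - 1) \<or> c ! k \<noteq> c ! 0"
        using neq[of k 0] neq[of "Suc k" "L - 1"] k L3 by auto
      have "{c ! k, c ! Suc k} \<noteq> {c ! (L - 1), c ! 0}"
        using n1 n2 by (auto simp: doubleton_eq_iff)
      then show "{c ! k, c ! Suc k} \<in> G" using ed[of k] k True by auto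
    qed
    then have r: "(c ! 0, c ! (L - 1)) \<in> (rel G)\<^sup>*" using path_conn[of 0 "L - 1" c G] by blast
    show False using True nc nc' r unfolding doubleton_eq_iff by blast
  next
    case False
    then have clG: "{c ! (L - 1), c ! 0} \<in> G" using cl by auto
    show False
    proof (cases "\<forall>k. Suc k < L \<longrightarrow> {c ! k, c ! Suc k} \<in> G")
      case True
      then have "is_path V G c" using cp unfolding is_path_def L_def by simp
      moreover have "{last c, hd c} \<in> G" using clG lh by simp
      ultimately have "is_cycle V G c" using c unfolding is_cycle_def by simp
      then show False using ac unfolding acyclic_graph_def by blast
    next
      case False
      then obtain j where j: "Suc j < L" "{c ! j, c ! Suc j} \<notin> G" by blast
      then have jxy: "{c ! j, c ! Suc j} = {x, y}" using ed by blast
      have oth: "{c ! k, c ! Suc k} \<in> G" if "Suc k < L" "k \<noteq> j" for k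
      proof -
        have n1: "c ! k \<noteq> c ! j" using neq[of k j] that j by simp
        have n2: "c ! k \<noteq> c ! Suc j \<or> c ! Suc k \<noteq> c ! j"
          using neq[of k "Suc j"] neq[of "Suc k" j] that j by auto
        have "{c ! k, c ! Suc k} \<noteq> {c ! j, c ! Suc j}"
          using n1 n2 by (auto simp: doubleton_eq_iff)
        then show ?thesis using ed[of k] that jxy by auto
      qed
      have r1: "(c ! Suc j, c ! (L - 1)) \<in> (rel G)\<^sup>*"
      proof (rule path_conn)
        fix k assume "Suc j \<le> k" "k < L - 1"
        then show "{c ! k, c ! Suc k} \<in> G" using oth[of k] by simp
      next
        show "Suc j \<le> L - 1" using j by simp
      qed
      have r2: "(c ! (L - 1), c ! 0) \<in> rel G" using clG by (simp add: rel_def)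
      have r3: "(c ! 0, c ! j) \<in> (rel G)\<^sup>*"
      proof (rule path_conn)
        fix k assume "0 \<le> k" "k < j"
        then show "{c ! k, c ! Suc k} \<in> G" using oth[of k] j by simp
      qed simp
      have "(c ! Suc j, c ! j) \<in> (rel G)\<^sup>*"
        using r1 r2 r3 by (meson rtrancl_into_rtrancl rtrancl_trans)
      then show False using jxy nc nc' unfolding doubleton_eq_iff by blast
    qed
  qed
qed



definition nb :: "'a set \<Rightarrow> 'a set set \<Rightarrow> 'a \<Rightarrow> 'a set" where
  "nb V E w = {u \<in> V. {u, w} \<in> E}"

lemma deg_nb: "deg V E w = card (nb V E w)"
  by (simp add: deg_def nb_def)

lemma card2_eq: "finite A \<Longrightarrow> card A = 2 \<Longrightarrow> x \<in> A \<Longrightarrow> y \<in> A \<Longrightarrow> x \<noteq> y \<Longrightarrow> A = {x, y}"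
proof -
  assume a: "finite A" "card A = 2" "x \<in> A" "y \<in> A" "x \<noteq> y"
  have "{x, y} \<subseteq> A" using a by simp
  moreover have "card {x, y} = card A" using a by simp
  ultimately show "A = {x, y}" using card_subset_eq[OF a(1)] by blast
qed

lemma nb_finite: "simple_graph V E \<Longrightarrow> finite (nb V E w)"
  unfolding simple_graph_def nb_def by auto

lemma seg_internal:
  "is_segment V E p \<Longrightarrow> 0 < i \<Longrightarrow> i < length p - 1 \<Longrightarrow> deg V E (p ! i) = 2"
  unfolding is_segment_def by blast

lemma seg_path: "is_segment V E p \<Longrightarrow> is_path V E p"
  unfolding is_segment_def by blast

lemma seg_len: "is_segment V E p \<Longrightarrow> length p \<ge> 2"
  unfolding is_segment_def by blast

lemma path_edge: "is_path V E p \<Longrightarrow> Suc i < length p \<Longrightarrow> {p ! i, p ! Suc i} \<in> E"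
  unfolding is_path_def by blast

lemma path_nth_V: "is_path V E p \<Longrightarrow> i < length p \<Longrightarrow> p ! i \<in> V"
  unfolding is_path_def by (meson nth_mem subsetD)

lemma path_distinct: "is_path V E p \<Longrightarrow> distinct p"
  unfolding is_path_def by blast

lemma nb_two:
  assumes sg: "simple_graph V E" and p: "is_segment V E p" and i: "0 < i" "i < length p - 1"
  shows "nb V E (p ! i) = {p ! (i - 1), p ! Suc i}"
proof -
  have pp: "is_path V E p" using p by (rule seg_path)
  have d: "card (nb V E (p ! i)) = 2" using seg_internal[OF p i] by (simp add: deg_nb)
  have e1: "{p ! (i - 1), p ! i} \<in> E" using path_edge[OF pp, of "i - 1"] i by simp
  have e2: "{p ! i, p ! Suc i} \<in> E" using path_edge[OF pp, of i] i by simp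
  have m1: "p ! (i - 1) \<in> nb V E (p ! i)" using e1 path_nth_V[OF pp, of "i - 1"] i
    by (simp add: nb_def)
  have m2: "p ! Suc i \<in> nb V E (p ! i)" using e2 path_nth_V[OF pp, of "Suc i"] i
    by (simp add: nb_def insert_commute)
  have ne: "p ! (i - 1) \<noteq> p ! Suc i"
    using nth_eq_iff_index_eq[OF path_distinct[OF pp], of "i - 1" "Suc i"] i by simp
  show ?thesis using card2_eq[OF nb_finite[OF sg] d m1 m2 ne] .
qed

lemma seg_agree:
  assumes sg: "simple_graph V E" and p: "is_segment V E p" and q: "is_segment V E q"
    and h0: "p ! 0 = q ! 0" and h1: "p ! 1 = q ! 1"
  shows "Suc i < min (length p) (length q) \<Longrightarrow> p ! i = q ! i \<and> p ! Suc i = q ! Suc i"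
proof (induction i)
  case 0 then show ?case using h0 h1 by simp
next
  case (Suc i)
  then have ih: "p ! i = q ! i" "p ! Suc i = q ! Suc i" by auto
  have lp: "Suc (Suc i) < length p" "Suc (Suc i) < length q" using Suc.prems by auto
  have lp': "Suc i < length p - 1" "Suc i < length q - 1" using lp by linarith+
  have np: "nb V E (p ! Suc i) = {p ! i, p ! Suc (Suc i)}"
    using nb_two[OF sg p, of "Suc i"] lp' by simp
  have nq: "nb V E (q ! Suc i) = {q ! i, q ! Suc (Suc i)}"
    using nb_two[OF sg q, of "Suc i"] lp' by simp
  have neq: "q ! i \<noteq> q ! Suc (Suc i)"
    using nth_eq_iff_index_eq[OF path_distinct[OF seg_path[OF q]], of i "Suc (Suc i)"] Suc.prems by simp
  have "{p ! i, p ! Suc (Suc i)} = {p ! i, q ! Suc (Suc i)}" using np nq ih by simp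
  then have "p ! Suc (Suc i) = q ! Suc (Suc i)" using neq ih
    by (metis doubleton_eq_iff)
  then show ?case using ih by simp
qed

lemma seg_len_le:
  assumes sg: "simple_graph V E" and p: "is_segment V E p" and q: "is_segment V E q"
    and h0: "p ! 0 = q ! 0" and h1: "p ! 1 = q ! 1" and le: "length p \<le> length q"
  shows "length p = length q"
proof (rule ccontr)
  assume "length p \<noteq> length q"
  then have lt: "length p < length q" using le by simp
  have l2: "length p \<ge> 2" using seg_len[OF p] .
  obtain m where m: "length p = Suc (Suc m)" using l2 by (metis add_2_eq_Suc le_Suc_ex)
  have "p ! (length p - 1) = q ! (length p - 1)"
    using seg_agree[OF sg p q h0 h1, of m] lt m by simp
  moreover have "deg V E (q ! (length p - 1)) = 2" using seg_internal[OF q] lt l2 by simp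
  moreover have "deg V E (last p) \<noteq> 2" using p unfolding is_segment_def by blast
  moreover have "p \<noteq> []" using l2 by auto
  then have "last p = p ! (length p - 1)" by (simp add: last_conv_nth)
  ultimately show False by simp
qed

lemma seg_unique:
  assumes sg: "simple_graph V E" and p: "is_segment V E p" and q: "is_segment V E q"
    and h0: "p ! 0 = q ! 0" and h1: "p ! 1 = q ! 1"
  shows "p = q"
proof -
  have len: "length p = length q"
  proof (cases "length p \<le> length q")
    case True then show ?thesis using seg_len_le[OF sg p q h0 h1] by simp
  next
    case False then show ?thesis using seg_len_le[OF sg q p h0[symmetric] h1[symmetric]] by simp
  qed
  show ?thesis
  proof (rule nth_equalityI[OF len])
    fix i assume i: "i < length p"
    show "p ! i = q ! i"
    proof (cases i)
      case 0 then show ?thesis using h0 by simp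
    next
      case (Suc j)
      then show ?thesis using seg_agree[OF sg p q h0 h1, of j] i len by simp
    qed
  qed
qed



lemma seg_exists:
  assumes sg: "simple_graph V E" and ac: "acyclic_graph V E" and w: "w \<in> V" "deg V E w \<noteq> 2"
    and x: "{x, w} \<in> E"
  shows "\<exists>p. is_segment V E p \<and> p ! 0 = w \<and> p ! 1 = x"
proof -
  define Q where "Q p \<longleftrightarrow> is_path V E p \<and> length p \<ge> 2 \<and> p ! 0 = w \<and> p ! 1 = x \<and>
     (\<forall>i. 0 < i \<and> i < length p - 1 \<longrightarrow> deg V E (p ! i) = 2)" for p
  have xw: "x \<noteq> w" "x \<in> V" using simple_edge[OF sg x] by auto
  have "Q [w, x]" unfolding Q_def is_path_def using xw w x
    by (auto simp: insert_commute less_Suc_eq)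
  moreover have "\<forall>p. Q p \<longrightarrow> length p < Suc (card V)"
    using path_length sg unfolding Q_def simple_graph_def by (metis less_Suc_eq_le)
  ultimately obtain p where p: "Q p" and pmax: "\<And>q. Q q \<Longrightarrow> length q \<le> length p"
    using Lattices_Big.ex_has_greatest_nat[of Q "[w, x]" length "Suc (card V)"] by blast
  have pp: "is_path V E p" and l2: "length p \<ge> 2" and p0: "p ! 0 = w" and p1: "p ! 1 = x"
    and pint: "\<And>i. 0 < i \<Longrightarrow> i < length p - 1 \<Longrightarrow> deg V E (p ! i) = 2"
    using p unfolding Q_def by auto
  have pne: "p \<noteq> []" using l2 by auto
  define m where "m = length p"
  have lastp: "last p = p ! (m - 1)" using pne by (simp add: m_def last_conv_nth)
  have hdp: "hd p = w" using pne p0 by (simp add: hd_conv_nth)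
  show ?thesis
  proof (cases "deg V E (last p) = 2")
    case False
    have "is_segment V E p" unfolding is_segment_def using pp l2 hdp w False pint by auto
    then show ?thesis using p0 p1 by blast
  next
    case True
    define z where "z = last p"
    have dz: "card (nb V E z) = 2" using True by (simp add: z_def deg_nb)
    have e1: "{p ! (m - 2), p ! Suc (m - 2)} \<in> E" using path_edge[OF pp, of "m - 2"] l2 m_def by simp
    have sm: "Suc (m - 2) = m - 1" using l2 m_def by simp
    have "p ! (m - 2) \<in> nb V E z" using e1 path_nth_V[OF pp, of "m - 2"] l2 sm lastp
      unfolding nb_def z_def m_def by simp
    have "\<not> nb V E z \<subseteq> {p ! (m - 2)}"
    proof
      assume "nb V E z \<subseteq> {p ! (m - 2)}"
      then have "card (nb V E z) \<le> card {p ! (m - 2)}" by (intro card_mono) auto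
      then show False using dz by simp
    qed
    then obtain t where t: "t \<in> nb V E z" "t \<noteq> p ! (m - 2)" by blast
    have tz: "{t, z} \<in> E" "t \<in> V" using t by (auto simp: nb_def)
    have tnz: "t \<noteq> z" using simple_edge[OF sg tz(1)] by simp
    have tnp: "t \<notin> set p"
    proof
      assume "t \<in> set p"
      then obtain j where j: "j < m" "p ! j = t" by (metis in_set_conv_nth m_def)
      have dp: "distinct p" using path_distinct[OF pp] .
      have "j \<noteq> m - 1" using j tnz lastp z_def by auto
      moreover have "j \<noteq> m - 2" using j t by auto
      ultimately have j3: "j + 3 \<le> m" using j by linarith
      define c where "c = drop j p"
      have "is_path V E c" using path_drop[OF pp] j by (simp add: c_def m_def)
      moreover have "length c \<ge> 3" using j3 by (simp add: c_def m_def)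
      moreover have "hd c = t" using j by (simp add: c_def m_def hd_drop_conv_nth)
      moreover have "last c = z" using j by (simp add: c_def m_def z_def)
      ultimately have "is_cycle V E c" unfolding is_cycle_def using tz by (simp add: insert_commute)
      then show False using ac unfolding acyclic_graph_def by blast
    qed
    have "Q (p @ [t])"
      unfolding Q_def
    proof (intro conjI allI impI)
      show "is_path V E (p @ [t])" using path_snoc[OF pp tnp tz(2)] tz z_def by (simp add: insert_commute)
      show "2 \<le> length (p @ [t])" using l2 by simp
      show "(p @ [t]) ! 0 = w" using p0 pne by (simp add: nth_append)
      show "(p @ [t]) ! 1 = x" using p1 l2 by (simp add: nth_append)
    next
      fix i assume i: "0 < i \<and> i < length (p @ [t]) - 1"
      show "deg V E ((p @ [t]) ! i) = 2"
      proof (cases "i < m - 1")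
        case True then show ?thesis using pint i by (simp add: nth_append m_def)
      next
        case False
        then have "i = m - 1" using i m_def by simp linarith
        then show ?thesis using True lastp i by (simp add: nth_append m_def)
      qed
    qed
    then have "length (p @ [t]) \<le> length p" by (rule pmax)
    then show ?thesis by simp
  qed
qed



lemma path_rev: "is_path V E p \<Longrightarrow> is_path V E (rev p)"
  unfolding is_path_def
proof (intro conjI allI impI)
  fix i assume a: "p \<noteq> [] \<and> distinct p \<and> set p \<subseteq> V \<and> (\<forall>i. Suc i < length p \<longrightarrow> {p ! i, p ! Suc i} \<in> E)"
    "Suc i < length (rev p)"
  define j where "j = length p - 2 - i"
  have j: "Suc j < length p" "length p - 1 - i = Suc j" "length p - 1 - Suc i = j"
    using a(2) unfolding j_def by auto
  have "{p ! j, p ! Suc j} \<in> E" using a(1) j(1) by blast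
  then show "{rev p ! i, rev p ! Suc i} \<in> E" using a(2) j by (simp add: rev_nth insert_commute)
qed auto

lemma seg_rev: "is_segment V E p \<Longrightarrow> is_segment V E (rev p)"
  unfolding is_segment_def
proof (intro conjI allI impI)
  fix i assume a: "is_path V E p \<and> 2 \<le> length p \<and> deg V E (hd p) \<noteq> 2 \<and> deg V E (last p) \<noteq> 2 \<and>
    (\<forall>i. 0 < i \<and> i < length p - 1 \<longrightarrow> deg V E (p ! i) = 2)" "0 < i \<and> i < length (rev p) - 1"
  have "0 < length p - 1 - i \<and> length p - 1 - i < length p - 1" using a(2) by auto
  then have "deg V E (p ! (length p - 1 - i)) = 2" using a(1) by blast
  moreover have "i < length p" using a(2) by (metis One_nat_def length_rev less_imp_diff_less less_diff_conv add_lessD1)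
  ultimately show "deg V E (rev p ! i) = 2" by (simp add: rev_nth)
next
  assume a: "is_path V E p \<and> 2 \<le> length p \<and> deg V E (hd p) \<noteq> 2 \<and> deg V E (last p) \<noteq> 2 \<and>
    (\<forall>i. 0 < i \<and> i < length p - 1 \<longrightarrow> deg V E (p ! i) = 2)"
  have ne: "p \<noteq> []" using a by auto
  show "is_path V E (rev p)" using a path_rev by blast
  show "2 \<le> length (rev p)" using a by simp
  show "deg V E (hd (rev p)) \<noteq> 2" using a ne by (simp add: hd_rev)
  show "deg V E (last (rev p)) \<noteq> 2" using a ne by (simp add: last_rev)
qed

lemma pe_rev: "path_edges (rev p) = path_edges p"
proof -
  have "x \<in> path_edges p" if xin: "x \<in> path_edges (rev p)" for x and p :: "'a list"
  proof -
    obtain i where i: "Suc i < length p" "x = {rev p ! i, rev p ! Suc i}"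
      using xin unfolding path_edges_def length_rev by blast
    define j where "j = length p - 2 - i"
    have j: "Suc j < length p" "length p - 1 - i = Suc j" "length p - 1 - Suc i = j"
      using i unfolding j_def by auto
    have "x = {p ! j, p ! Suc j}" using i j by (simp add: rev_nth insert_commute)
    then show ?thesis using j unfolding path_edges_def by auto
  qed
  from this[of _ p] this[of _ "rev p"] show ?thesis by auto
qed

lemma seg_fiber:
  assumes sg: "simple_graph V E" and p: "is_segment V E p" and q: "is_segment V E q"
    and pe: "path_edges p = path_edges q"
  shows "q = p \<or> q = rev p"
proof -
  have l2: "length p \<ge> 2" "length q \<ge> 2" using p q by (auto simp: is_segment_def)
  have "{p ! 0, p ! Suc 0} \<in> path_edges p" using l2 unfolding path_edges_def by force
  then obtain i where i: "Suc i < length q" "{p ! 0, p ! Suc 0} = {q ! i, q ! Suc i}"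
    using pe unfolding path_edges_def by auto
  have pne: "p \<noteq> []" using l2 by auto
  have d0: "deg V E (p ! 0) \<noteq> 2" using p pne unfolding is_segment_def by (simp add: hd_conv_nth)
  show ?thesis
  proof (cases "p ! 0 = q ! i \<and> p ! Suc 0 = q ! Suc i")
    case True
    have "i = 0"
    proof (rule ccontr)
      assume "i \<noteq> 0"
      then have "deg V E (q ! i) = 2" using seg_internal[OF q, of i] i by simp
      then show False using d0 True by simp
    qed
    then have "p = q" using seg_unique[OF sg p q] True by simp
    then show ?thesis by simp
  next
    case False
    then have F: "p ! 0 = q ! Suc i" "p ! Suc 0 = q ! i" using i(2) by (auto simp: doubleton_eq_iff)
    have si: "Suc i = length q - 1"
    proof (rule ccontr)
      assume "Suc i \<noteq> length q - 1"
      then have "deg V E (q ! Suc i) = 2" using seg_internal[OF q, of "Suc i"] i by simp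
      then show False using d0 F by simp
    qed
    have q0: "0 < length q" "1 < length q" using l2 by auto
    have r0: "rev q ! 0 = p ! 0" using F si rev_nth[OF q0(1)] by simp
    have ii: "length q - Suc (Suc 0) = i" using si by simp
    have r1: "rev q ! 1 = p ! 1" using F ii rev_nth[OF q0(2)] by simp
    have "p = rev q" using seg_unique[OF sg p seg_rev[OF q]] r0 r1 by simp
    then show ?thesis by simp
  qed
qed



lemma seg_count:
  assumes sg: "simple_graph V E" and ac: "acyclic_graph V E"
  shows "2 * num_segments V E = (\<Sum>w\<in>{w \<in> V. deg V E w \<noteq> 2}. deg V E w)"
proof -
  define L where "L = {p. is_segment V E p}"
  have fV: "finite V" using sg by (simp add: simple_graph_def)
  have "L \<subseteq> {xs. set xs \<subseteq> V \<and> length xs \<le> card V}"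
    unfolding L_def is_segment_def using path_length fV by (auto simp: is_path_def)
  then have fL: "finite L" using finite_lists_length_le[OF fV] finite_subset by blast
  have segs: "segments V E = path_edges ` L" unfolding segments_def L_def by auto
  define D where "D = Sigma {w \<in> V. deg V E w \<noteq> 2} (nb V E)"
  have bij: "bij_betw (\<lambda>p. (p ! 0, p ! 1)) L D"
    unfolding bij_betw_def
  proof (intro conjI)
    show "inj_on (\<lambda>p. (p ! 0, p ! 1)) L"
      by (rule inj_onI) (use seg_unique[OF sg] in \<open>auto simp: L_def\<close>)
    show "(\<lambda>p. (p ! 0, p ! 1)) ` L = D"
    proof
      show "(\<lambda>p. (p ! 0, p ! 1)) ` L \<subseteq> D"
      proof
        fix z assume "z \<in> (\<lambda>p. (p ! 0, p ! 1)) ` L"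
        then obtain p where p: "is_segment V E p" "z = (p ! 0, p ! 1)" by (auto simp: L_def)
        have pp: "is_path V E p" and l2: "length p \<ge> 2" using p(1) by (auto simp: is_segment_def)
        have pne: "p \<noteq> []" using l2 by auto
        have "deg V E (p ! 0) \<noteq> 2" using p(1) pne by (simp add: is_segment_def hd_conv_nth)
        moreover have "p ! 0 \<in> V" using path_nth_V[OF pp, of 0] pne by simp
        moreover have "{p ! 0, p ! Suc 0} \<in> E" using path_edge[OF pp, of 0] l2 by simp
        moreover have "p ! 1 \<in> V" using path_nth_V[OF pp, of 1] l2 by simp
        ultimately show "z \<in> D" using p(2) by (auto simp: D_def nb_def insert_commute)
      qed
    next
      show "D \<subseteq> (\<lambda>p. (p ! 0, p ! 1)) ` L"
      proof
        fix z assume "z \<in> D"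
        then obtain w x where z: "z = (w, x)" "w \<in> V" "deg V E w \<noteq> 2" "{x, w} \<in> E"
          by (auto simp: D_def nb_def)
        obtain p where "is_segment V E p" "p ! 0 = w" "p ! 1 = x"
          using seg_exists[OF sg ac z(2) z(3) z(4)] by blast
        then show "z \<in> (\<lambda>p. (p ! 0, p ! 1)) ` L" using z(1) by (auto simp: L_def)
      qed
    qed
  qed
  have "card L = card D" using bij_betw_same_card[OF bij] .
  also have "\<dots> = (\<Sum>w\<in>{w \<in> V. deg V E w \<noteq> 2}. card (nb V E w))"
    unfolding D_def using fV nb_finite[OF sg] by (simp add: card_SigmaI)
  also have "\<dots> = (\<Sum>w\<in>{w \<in> V. deg V E w \<noteq> 2}. deg V E w)" by (simp add: deg_nb)
  finally have cL: "card L = (\<Sum>w\<in>{w \<in> V. deg V E w \<noteq> 2}. deg V E w)" .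
  have fib: "card {q \<in> L. path_edges q = s} = 2" if s: "s \<in> path_edges ` L" for s
  proof -
    obtain p where p: "p \<in> L" "s = path_edges p" using s by blast
    have ps: "is_segment V E p" using p by (simp add: L_def)
    have "{q \<in> L. path_edges q = s} = {p, rev p}"
    proof
      show "{q \<in> L. path_edges q = s} \<subseteq> {p, rev p}"
        using seg_fiber[OF sg ps] p by (auto simp: L_def)
      show "{p, rev p} \<subseteq> {q \<in> L. path_edges q = s}"
        using p seg_rev[OF ps] pe_rev[of p] by (auto simp: L_def)
    qed
    moreover have "p \<noteq> rev p"
    proof
      assume eq: "p = rev p"
      have l2: "length p \<ge> 2" using ps by (simp add: is_segment_def)
      have d: "distinct p" using path_distinct[OF seg_path[OF ps]] .
      have l0: "0 < length p" using l2 by auto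
      have "rev p ! 0 = p ! (length p - 1)" using rev_nth[OF l0] by simp
      then have "p ! 0 = p ! (length p - 1)" using eq by simp
      moreover have "0 \<noteq> length p - 1" "length p - 1 < length p" using l2 by auto
      ultimately show False using nth_eq_iff_index_eq[OF d, of 0 "length p - 1"] l0 by simp
    qed
    ultimately show ?thesis by simp
  qed
  have "card L = (\<Sum>s\<in>path_edges ` L. card {q \<in> L. path_edges q = s})"
    using sum.image_gen[OF fL, of "\<lambda>_. (1::nat)" path_edges] by simp
  also have "\<dots> = (\<Sum>s\<in>path_edges ` L. 2)" using fib by simp
  also have "\<dots> = 2 * card (path_edges ` L)" by simp
  finally have "card L = 2 * num_segments V E" unfolding num_segments_def segs .
  then show ?thesis using cL by simp
qed



lemma ineq16: "(db::nat) < 4 \<Longrightarrow> dy < 4 \<Longrightarrow> 4 * db + 4 * dy < 16 + db * dy"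
proof -
  assume "db < 4" "dy < 4"
  then have "db = 0 \<or> db = 1 \<or> db = 2 \<or> db = 3" "dy = 0 \<or> dy = 1 \<or> dy = 2 \<or> dy = 3" by arith+
  then show ?thesis by (elim disjE) simp_all
qed

lemma card_swap:
  assumes "finite A" "b \<in> A" "v \<notin> A"
  shows "card (insert v (A - {b})) = card A"
proof -
  have "v \<notin> A - {b}" using assms by simp
  then have "card (insert v (A - {b})) = Suc (card (A - {b}))" using assms(1) by simp
  also have "\<dots> = card A"
  proof -
    have "card (A - {b}) = card A - 1" using assms(1,2) by (simp add: card_Diff_singleton)
    moreover have "card A > 0" using assms(1,2) card_gt_0_iff by blast
    ultimately show ?thesis by simp
  qed
  finally show ?thesis .
qed

lemma switch:
  assumes ct: "chemical_tree V E" and ab: "{a, b} \<in> E" and vy: "{v, y} \<in> E"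
    and d1: "a \<noteq> v" and d2: "b \<noteq> y" and d3: "a \<noteq> y" and d4: "b \<noteq> v"
    and bv: "(b, v) \<in> (rel (E - {{a, b}, {v, y}}))\<^sup>*"
    and da: "deg V E a = 4" and dv: "deg V E v = 4" and db: "deg V E b < 4" and dy: "deg V E y < 4"
  shows "\<exists>E'. chemical_tree V E' \<and> num_segments V E' = num_segments V E \<and> M2 V E < M2 V E'"
proof -
  have sg: "simple_graph V E" and conn: "connected_graph V E" and ac: "acyclic_graph V E"
    and dle: "\<And>w. w \<in> V \<Longrightarrow> deg V E w \<le> 4"
    using ct by (auto simp: chemical_tree_def is_tree_def)
  have abV: "a \<noteq> b" "a \<in> V" "b \<in> V" using simple_edge[OF sg ab] by auto
  have vyV: "v \<noteq> y" "v \<in> V" "y \<in> V" using simple_edge[OF sg vy] by auto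
  define F where "F = E - {{a, b}, {v, y}}"
  define E' where "E' = insert {b, y} (insert {a, v} F)"
  have FE: "F \<subseteq> E" unfolding F_def by auto
  have Fab: "F \<subseteq> E - {{a, b}}" unfolding F_def by auto
  have Fvy: "F \<subseteq> E - {{v, y}}" unfolding F_def by auto
  have nab: "(a, b) \<notin> (rel (E - {{a, b}}))\<^sup>*" using acyclic_edge[OF sg ac ab] .
  have nvy: "(v, y) \<notin> (rel (E - {{v, y}}))\<^sup>*" using acyclic_edge[OF sg ac vy] .
  have bvF: "(b, v) \<in> (rel F)\<^sup>*" using bv by (simp add: F_def)
  have vbF: "(v, b) \<in> (rel F)\<^sup>*" using conn_sym[OF bvF] .
  have ab_ne_vy: "{a, b} \<noteq> {v, y}" using d1 d3 by (auto simp: doubleton_eq_iff)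
  have av_notin: "{a, v} \<notin> E"
  proof
    assume "{a, v} \<in> E"
    moreover have "{a, v} \<noteq> {a, b}" "{a, v} \<noteq> {v, y}" using d4 d3 by (auto simp: doubleton_eq_iff)
    ultimately have "(a, v) \<in> rel F" by (simp add: F_def rel_def)
    then have "(a, b) \<in> (rel F)\<^sup>*" using vbF by (meson converse_rtrancl_into_rtrancl)
    then show False using nab conn_mono[OF Fab] by blast
  qed
  have by_notin: "{b, y} \<notin> E"
  proof
    assume "{b, y} \<in> E"
    moreover have "{b, y} \<noteq> {a, b}" "{b, y} \<noteq> {v, y}" using d3 d4 by (auto simp: doubleton_eq_iff)
    ultimately have "(b, y) \<in> rel F" by (simp add: F_def rel_def)
    then have "(v, y) \<in> (rel F)\<^sup>*" using vbF by (meson rtrancl_into_rtrancl)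
    then show False using nvy conn_mono[OF Fvy] by blast
  qed
  have nbA: "nb V E' a = insert v (nb V E a - {b})"
    unfolding nb_def E'_def F_def using d1 d2 d3 d4 abV vyV by (auto simp: doubleton_eq_iff)
  have nbB: "nb V E' b = insert y (nb V E b - {a})"
    unfolding nb_def E'_def F_def using d1 d2 d3 d4 abV vyV by (auto simp: doubleton_eq_iff)
  have nbV: "nb V E' v = insert a (nb V E v - {y})"
    unfolding nb_def E'_def F_def using d1 d2 d3 d4 abV vyV by (auto simp: doubleton_eq_iff)
  have nbY: "nb V E' y = insert b (nb V E y - {v})"
    unfolding nb_def E'_def F_def using d1 d2 d3 d4 abV vyV by (auto simp: doubleton_eq_iff)
  have nbO: "nb V E' w = nb V E w" if "w \<notin> {a, b, v, y}" for w
    unfolding nb_def E'_def F_def using that by (auto simp: doubleton_eq_iff)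
  have fnb: "\<And>w. finite (nb V E w)" using nb_finite[OF sg] .
  have degE': "deg V E' = deg V E"
  proof
    fix w
    have inb: "a \<in> nb V E b" "b \<in> nb V E a" "v \<in> nb V E y" "y \<in> nb V E v"
      using ab vy abV vyV by (auto simp: nb_def insert_commute)
    have onb: "v \<notin> nb V E a" "a \<notin> nb V E v" "y \<notin> nb V E b" "b \<notin> nb V E y"
      using av_notin by_notin by (auto simp: nb_def insert_commute)
    show "deg V E' w = deg V E w"
    proof (cases "w \<in> {a, b, v, y}")
      case False then show ?thesis unfolding deg_nb using nbO by simp
    next
      case True
      then consider "w = a" | "w = b" | "w = v" | "w = y" by blast
      then show ?thesis
      proof cases
        case 1 then show ?thesis using nbA card_swap[OF fnb inb(2) onb(1)] by (simp add: deg_nb)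
      next
        case 2 then show ?thesis using nbB card_swap[OF fnb inb(1) onb(3)] by (simp add: deg_nb)
      next
        case 3 then show ?thesis using nbV card_swap[OF fnb inb(4) onb(2)] by (simp add: deg_nb)
      next
        case 4 then show ?thesis using nbY card_swap[OF fnb inb(3) onb(4)] by (simp add: deg_nb)
      qed
    qed
  qed
  have sg': "simple_graph V E'"
    using sg abV vyV d1 d2 unfolding simple_graph_def E'_def F_def by blast
  have E'conn: "(p, q) \<in> (rel E')\<^sup>*" if "{p, q} \<in> E" for p q
  proof -
    have FE': "F \<subseteq> E'" unfolding E'_def by auto
    have av: "(a, v) \<in> rel E'" "(v, a) \<in> rel E'" by (auto simp: E'_def rel_def insert_commute)
    have by': "(b, y) \<in> rel E'" "(y, b) \<in> rel E'" by (auto simp: E'_def rel_def insert_commute)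
    have vb: "(v, b) \<in> (rel E')\<^sup>*" "(b, v) \<in> (rel E')\<^sup>*" using conn_mono[OF FE'] vbF bvF by auto
    have ab': "(a, b) \<in> (rel E')\<^sup>*" using av(1) vb(1) by (meson converse_rtrancl_into_rtrancl)
    have vy': "(v, y) \<in> (rel E')\<^sup>*" using vb(1) by'(1) by (meson rtrancl_into_rtrancl)
    show ?thesis
    proof (cases "{p, q} \<in> F")
      case True then show ?thesis using FE' by (auto simp: rel_def)
    next
      case False
      then have "{p, q} = {a, b} \<or> {p, q} = {v, y}" using that by (auto simp: F_def)
      then show ?thesis using ab' vy' conn_sym[OF ab'] conn_sym[OF vy']
        by (auto simp: doubleton_eq_iff)
    qed
  qed
  have conn': "connected_graph V E'"
    unfolding connected_graph_def
  proof (intro ballI)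
    fix u w assume "u \<in> V" "w \<in> V"
    then have "(u, w) \<in> (rel E)\<^sup>*" using conn unfolding connected_graph_def rel_def by blast
    then show "(u, w) \<in> {(x, y). {x, y} \<in> E'}\<^sup>*" using conn_sim[OF E'conn] unfolding rel_def by blast
  qed
  have acF: "acyclic_graph V F" using acyclic_mono[OF ac FE] .
  have nav: "(a, v) \<notin> (rel F)\<^sup>*"
  proof
    assume "(a, v) \<in> (rel F)\<^sup>*"
    then have "(a, b) \<in> (rel F)\<^sup>*" using vbF by simp
    then show False using nab conn_mono[OF Fab] by blast
  qed
  have ac1: "acyclic_graph V (insert {a, v} F)" using add_edge_acyclic[OF acF nav] .
  have nby: "(b, y) \<notin> (rel (insert {a, v} F))\<^sup>*"
  proof
    assume c: "(b, y) \<in> (rel (insert {a, v} F))\<^sup>*"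
    have sim: "(p, q) \<in> (rel (E - {{v, y}}))\<^sup>*" if "{p, q} \<in> insert {a, v} F" for p q
    proof (cases "{p, q} \<in> F")
      case True then show ?thesis using Fvy by (auto simp: rel_def)
    next
      case False
      then have pq: "{p, q} = {a, v}" using that by simp
      have "(a, b) \<in> rel (E - {{v, y}})" using ab ab_ne_vy by (simp add: rel_def)
      moreover have "(b, v) \<in> (rel (E - {{v, y}}))\<^sup>*" using conn_mono[OF Fvy bvF] .
      ultimately have "(a, v) \<in> (rel (E - {{v, y}}))\<^sup>*" by (meson converse_rtrancl_into_rtrancl)
      then show ?thesis using pq conn_sym by (auto simp: doubleton_eq_iff)
    qed
    have "(b, y) \<in> (rel (E - {{v, y}}))\<^sup>*" using conn_sim[OF sim c] .
    moreover have "(v, b) \<in> (rel (E - {{v, y}}))\<^sup>*" using conn_mono[OF Fvy vbF] .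
    ultimately have "(v, y) \<in> (rel (E - {{v, y}}))\<^sup>*" by simp
    then show False using nvy by simp
  qed
  have ac': "acyclic_graph V E'" unfolding E'_def using add_edge_acyclic[OF ac1 nby] .
  have Vne: "V \<noteq> {}" using ct by (simp add: chemical_tree_def is_tree_def)
  have ct': "chemical_tree V E'"
    unfolding chemical_tree_def is_tree_def
  proof (intro conjI ballI)
    fix w assume "w \<in> V"
    then show "deg V E' w \<le> 4" using dle degE' by simp
  qed (use sg' Vne conn' ac' in auto)
  have ns: "num_segments V E' = num_segments V E"
  proof -
    have "2 * num_segments V E' = 2 * num_segments V E"
      using seg_count[OF sg ac] seg_count[OF sg' ac'] degE' by simp
    then show ?thesis by simp
  qed
  define g where "g e = (\<Prod>x\<in>e. deg V E x)" for e
  have fE: "finite E"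
  proof -
    have "E \<subseteq> Pow V"
    proof
      fix e assume "e \<in> E"
      then obtain u w where "e = {u, w}" "u \<in> V" "w \<in> V" using sg unfolding simple_graph_def by blast
      then show "e \<in> Pow V" by simp
    qed
    moreover have "finite (Pow V)" using sg unfolding simple_graph_def by simp
    ultimately show ?thesis using finite_subset by blast
  qed
  have fF: "finite F" using fE FE finite_subset by blast
  have M2g: "M2 V E = sum g E" unfolding M2_def g_def by simp
  have M2g': "M2 V E' = sum g E'" unfolding M2_def g_def degE' by simp
  have Eeq: "E = insert {a, b} (insert {v, y} F)" using ab vy unfolding F_def by auto
  have n1: "{a, b} \<notin> insert {v, y} F" using ab_ne_vy by (simp add: F_def)
  have n2: "{v, y} \<notin> F" by (simp add: F_def)
  have M2E: "M2 V E = g {a, b} + (g {v, y} + sum g F)"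
  proof -
    have "sum g (insert {a, b} (insert {v, y} F)) = g {a, b} + (g {v, y} + sum g F)"
      using n1 n2 fF by simp
    then show ?thesis using M2g Eeq by simp
  qed
  have n3: "{b, y} \<notin> insert {a, v} F" using d2 d4 abV(1) by_notin FE by (auto simp: doubleton_eq_iff)
  have n4: "{a, v} \<notin> F" using av_notin FE by auto
  have M2E': "M2 V E' = g {b, y} + (g {a, v} + sum g F)"
    using M2g' n3 n4 fF unfolding E'_def by simp
  have "g {a, b} = 4 * deg V E b" using abV(1) da by (simp add: g_def)
  moreover have "g {v, y} = 4 * deg V E y" using vyV(1) dv by (simp add: g_def)
  moreover have "g {b, y} = deg V E b * deg V E y" using d2 by (simp add: g_def)
  moreover have "g {a, v} = 16" using d1 da dv by (simp add: g_def)
  ultimately have "M2 V E < M2 V E'" using M2E M2E' ineq16[OF db dy] by simp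
  then show ?thesis using ct' ns by blast
qed



lemma conn_def': "connected_graph V E \<longleftrightarrow> (\<forall>u\<in>V. \<forall>v\<in>V. (u, v) \<in> (rel E)\<^sup>*)"
  by (simp add: connected_graph_def rel_def)

theorem corollary1:
  fixes n k :: nat and V :: "nat set" and E :: "nat set set"
  assumes "3 \<le> k" and "k \<le> n - 1"
    and "(V, E) \<in> CT n k"
    and "\<forall>V' E'. (V', E') \<in> CT n k \<longrightarrow> M2 V' E' \<le> M2 V E"
    and "max_degree V E = 4"
  shows "is_tree {v \<in> V. deg V E v = 4} {e \<in> E. e \<subseteq> {v \<in> V. deg V E v = 4}}"
proof -
  have ct: "chemical_tree V E" and cV: "card V = n" and nsk: "num_segments V E = k"
    using assms(3) by (auto simp: CT_def)
  have sg: "simple_graph V E" and conn: "connected_graph V E" and ac: "acyclic_graph V E"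
    and Vne: "V \<noteq> {}" and dle: "\<And>w. w \<in> V \<Longrightarrow> deg V E w \<le> 4"
    using ct by (auto simp: chemical_tree_def is_tree_def)
  have fV: "finite V" using sg by (simp add: simple_graph_def)
  define S where "S = {v \<in> V. deg V E v = 4}"
  define ES where "ES = {e \<in> E. e \<subseteq> S}"
  have SV: "S \<subseteq> V" unfolding S_def by auto
  have ESE: "ES \<subseteq> E" unfolding ES_def by auto
  have sgS: "simple_graph S ES"
    unfolding simple_graph_def
  proof (intro conjI ballI)
    show "finite S" using fV SV finite_subset by blast
  next
    fix e assume e: "e \<in> ES"
    then obtain u w where "e = {u, w}" "u \<noteq> w" using sg unfolding simple_graph_def ES_def by blast
    moreover have "e \<subseteq> S" using e unfolding ES_def by blast
    ultimately show "\<exists>u v. e = {u, v} \<and> u \<noteq> v \<and> u \<in> S \<and> v \<in> S" by blast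
  qed
  have Sne: "S \<noteq> {}"
  proof -
    have "Max (deg V E ` V) \<in> deg V E ` V" using fV Vne by (intro Max_in) auto
    then show ?thesis using assms(5) unfolding max_degree_def S_def by auto
  qed
  have acS: "acyclic_graph S ES"
    unfolding acyclic_graph_def is_cycle_def
  proof
    assume "\<exists>c. is_path S ES c \<and> 3 \<le> length c \<and> {last c, hd c} \<in> ES"
    then obtain c where "is_path S ES c" "3 \<le> length c" "{last c, hd c} \<in> ES" by blast
    then have "is_cycle V E c" unfolding is_cycle_def using is_path_mono[OF _ ESE SV] ESE by blast
    then show False using ac unfolding acyclic_graph_def by blast
  qed
  have connS: "connected_graph S ES"
    unfolding conn_def'
  proof (rule ccontr)
    assume "\<not> (\<forall>u\<in>S. \<forall>w\<in>S. (u, w) \<in> (rel ES)\<^sup>*)"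
    then obtain u w where uw: "u \<in> S" "w \<in> S" "(u, w) \<notin> (rel ES)\<^sup>*" by blast
    define Q where "Q p \<longleftrightarrow> is_path V E p \<and> hd p \<in> S \<and> last p \<in> S \<and> (hd p, last p) \<notin> (rel ES)\<^sup>*" for p
    have "(u, w) \<in> (rel E)\<^sup>*" using conn uw SV unfolding conn_def' by blast
    then obtain p0 where "is_path V E p0" "hd p0 = u" "last p0 = w"
      using walk_to_path[OF sg] uw SV by blast
    then have "Q p0" using uw by (simp add: Q_def)
    moreover have "\<forall>p. Q p \<longrightarrow> length p < Suc (card V)"
      using path_length fV unfolding Q_def by (metis less_Suc_eq_le)
    ultimately obtain p where p: "Q p" and pmax: "\<And>q. Q q \<Longrightarrow> length q \<le> length p"
      using Lattices_Big.ex_has_greatest_nat[of Q p0 length "Suc (card V)"] by blast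
    have pp: "is_path V E p" and hS: "hd p \<in> S" and lS: "last p \<in> S"
      and nS: "(hd p, last p) \<notin> (rel ES)\<^sup>*" using p unfolding Q_def by auto
    have pne: "p \<noteq> []" using pp by (simp add: is_path_def)
    have dp: "distinct p" using path_distinct[OF pp] .
    define m where "m = length p"
    have hdp: "hd p = p ! 0" using pne by (simp add: hd_conv_nth)
    have lastp: "last p = p ! (m - 1)" using pne by (simp add: m_def last_conv_nth)
    have m2: "m \<ge> 2"
    proof (rule ccontr)
      assume nm: "\<not> m \<ge> 2"
      have "m > 0" using pne m_def by simp
      then have "m = 1" using nm by linarith
      then have "hd p = last p" using hdp lastp by simp
      then show False using nS by simp
    qed
    define v where "v = last p"
    have inS: "p ! k \<in> S" if "k < m" "deg V E (p ! k) = 4" for k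
      using that path_nth_V[OF pp, of k] unfolding S_def m_def by simp
    have ex: "\<exists>i. i < m \<and> deg V E (p ! i) \<noteq> 4"
    proof (rule ccontr)
      assume "\<not> (\<exists>i. i < m \<and> deg V E (p ! i) \<noteq> 4)"
      then have all: "\<And>k. k < m \<Longrightarrow> p ! k \<in> S" using inS by blast
      have "\<And>k. 0 \<le> k \<Longrightarrow> k < m - 1 \<Longrightarrow> {p ! k, p ! Suc k} \<in> ES"
      proof -
        fix k assume k: "0 \<le> k" "k < m - 1"
        have "{p ! k, p ! Suc k} \<in> E" using path_edge[OF pp, of k] k m_def by simp
        moreover have "p ! k \<in> S" "p ! Suc k \<in> S" using all k by auto
        ultimately show "{p ! k, p ! Suc k} \<in> ES" unfolding ES_def by simp
      qed
      then have "(p ! 0, p ! (m - 1)) \<in> (rel ES)\<^sup>*" using path_conn[of 0 "m - 1" p ES] by blast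
      then show False using nS hdp lastp by simp
    qed
    define i where "i = (LEAST i. i < m \<and> deg V E (p ! i) \<noteq> 4)"
    have i: "i < m" "deg V E (p ! i) \<noteq> 4" using LeastI_ex[OF ex] unfolding i_def by blast+
    have bef: "deg V E (p ! j) = 4" if "j < i" for j
      using not_less_Least[of j "\<lambda>i. i < m \<and> deg V E (p ! i) \<noteq> 4"] that i(1) unfolding i_def by auto
    have i0: "i \<noteq> 0"
    proof
      assume "i = 0"
      then show False using i(2) hS hdp unfolding S_def by simp
    qed
    have im: "i \<noteq> m - 1"
    proof
      assume "i = m - 1"
      then show False using i(2) lS lastp unfolding S_def by simp
    qed
    define a where "a = p ! (i - 1)"
    define b where "b = p ! i"
    have da: "deg V E a = 4" using bef[of "i - 1"] i0 unfolding a_def by simp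
    have bV: "b \<in> V" using path_nth_V[OF pp, of i] i unfolding b_def m_def by simp
    have db: "deg V E b < 4" using dle[OF bV] i(2) unfolding b_def by simp
    have ab: "{a, b} \<in> E" using path_edge[OF pp, of "i - 1"] i0 i unfolding a_def b_def m_def by simp
    have Sa: "(p ! 0, a) \<in> (rel ES)\<^sup>*"
    proof -
      have "\<And>k. 0 \<le> k \<Longrightarrow> k < i - 1 \<Longrightarrow> {p ! k, p ! Suc k} \<in> ES"
      proof -
        fix k assume k: "0 \<le> k" "k < i - 1"
        have "{p ! k, p ! Suc k} \<in> E" using path_edge[OF pp, of k] k i m_def by simp
        moreover have "p ! k \<in> S" "p ! Suc k \<in> S" using inS bef k i by auto
        ultimately show "{p ! k, p ! Suc k} \<in> ES" unfolding ES_def by simp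
      qed
      then show ?thesis using path_conn[of 0 "i - 1" p ES] unfolding a_def by blast
    qed
    have nav: "(a, v) \<notin> (rel ES)\<^sup>*"
    proof
      assume "(a, v) \<in> (rel ES)\<^sup>*"
      then have "(p ! 0, v) \<in> (rel ES)\<^sup>*" using Sa by simp
      then show False using nS hdp v_def by simp
    qed
    have av: "a \<noteq> v" using nav by auto
    have vS: "v \<in> S" using lS v_def by simp
    have dv: "deg V E v = 4" using vS unfolding S_def by simp
    have vm: "v = p ! (m - 1)" using lastp v_def by simp
    have e1: "{p ! (m - 2), p ! Suc (m - 2)} \<in> E" using path_edge[OF pp, of "m - 2"] m2 m_def by simp
    have sm: "Suc (m - 2) = m - 1" using m2 by simp
    have "p ! (m - 2) \<in> nb V E v" using e1 path_nth_V[OF pp, of "m - 2"] m2 sm vm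
      unfolding nb_def m_def by simp
    moreover have "card (nb V E v) = 4" using dv by (simp add: deg_nb)
    moreover have "\<not> nb V E v \<subseteq> {p ! (m - 2)}"
    proof
      assume "nb V E v \<subseteq> {p ! (m - 2)}"
      then have "card (nb V E v) \<le> card {p ! (m - 2)}" by (intro card_mono) auto
      then show False using \<open>card (nb V E v) = 4\<close> by simp
    qed
    ultimately obtain y where y: "y \<in> nb V E v" "y \<noteq> p ! (m - 2)" by blast
    have yv: "{y, v} \<in> E" "y \<in> V" using y by (auto simp: nb_def)
    have vy: "{v, y} \<in> E" using yv by (simp add: insert_commute)
    have ynv: "y \<noteq> v" using simple_edge[OF sg yv(1)] by simp
    have ynp: "y \<notin> set p"
    proof
      assume "y \<in> set p"
      then obtain j where j: "j < m" "p ! j = y" by (metis in_set_conv_nth m_def)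
      have "j \<noteq> m - 1" using j ynv vm by auto
      moreover have "j \<noteq> m - 2" using j y by auto
      ultimately have j3: "j + 3 \<le> m" using j by linarith
      define c where "c = drop j p"
      have "is_path V E c" using path_drop[OF pp] j by (simp add: c_def m_def)
      moreover have "length c \<ge> 3" using j3 by (simp add: c_def m_def)
      moreover have "hd c = y" using j by (simp add: c_def m_def hd_drop_conv_nth)
      moreover have "last c = v" using j by (simp add: c_def m_def v_def)
      ultimately have "is_cycle V E c" unfolding is_cycle_def using vy by simp
      then show False using ac unfolding acyclic_graph_def by blast
    qed
    have dy: "deg V E y < 4"
    proof (rule ccontr)
      assume "\<not> deg V E y < 4"
      then have "deg V E y = 4" using dle[OF yv(2)] by simp
      then have yS: "y \<in> S" using yv unfolding S_def by simp
      have "Q (p @ [y])"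
        unfolding Q_def
      proof (intro conjI)
        show "is_path V E (p @ [y])" using path_snoc[OF pp ynp yv(2)] vy v_def by simp
        show "hd (p @ [y]) \<in> S" using hS pne by simp
        show "last (p @ [y]) \<in> S" using yS by simp
        show "(hd (p @ [y]), last (p @ [y])) \<notin> (rel ES)\<^sup>*"
        proof
          assume "(hd (p @ [y]), last (p @ [y])) \<in> (rel ES)\<^sup>*"
          then have c1: "(hd p, y) \<in> (rel ES)\<^sup>*" using pne by simp
          have "{y, v} \<in> ES" using yv yS vS unfolding ES_def by simp
          then have "(y, v) \<in> rel ES" by (simp add: rel_def)
          then have "(hd p, v) \<in> (rel ES)\<^sup>*" using c1 by (meson rtrancl_into_rtrancl)
          then show False using nS v_def by simp
        qed
      qed
      then have "length (p @ [y]) \<le> length p" by (rule pmax)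
      then show False by simp
    qed
    have bv: "(b, v) \<in> (rel (E - {{a, b}, {v, y}}))\<^sup>*"
    proof -
      have "\<And>k. i \<le> k \<Longrightarrow> k < m - 1 \<Longrightarrow> {p ! k, p ! Suc k} \<in> E - {{a, b}, {v, y}}"
      proof -
        fix k assume k: "i \<le> k" "k < m - 1"
        have "{p ! k, p ! Suc k} \<in> E" using path_edge[OF pp, of k] k m_def by simp
        moreover have "p ! k \<noteq> a" using nth_eq_iff_index_eq[OF dp, of k "i - 1"] k i0 m_def
          unfolding a_def by simp
        moreover have "p ! Suc k \<noteq> a"
          using nth_eq_iff_index_eq[OF dp, of "Suc k" "i - 1"] k i0 m_def unfolding a_def by simp
        moreover have "p ! k \<noteq> y" "p ! Suc k \<noteq> y" using ynp k m_def by auto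
        ultimately show "{p ! k, p ! Suc k} \<in> E - {{a, b}, {v, y}}"
          by (auto simp: doubleton_eq_iff)
      qed
      then have "(p ! i, p ! (m - 1)) \<in> (rel (E - {{a, b}, {v, y}}))\<^sup>*"
        using path_conn[of i "m - 1" p] im i by simp
      then show ?thesis using vm unfolding b_def by simp
    qed
    have d2: "b \<noteq> y" using ynp i unfolding b_def m_def by auto
    have d3: "a \<noteq> y" using ynp i i0 unfolding a_def m_def by auto
    have d4: "b \<noteq> v" using db dv by auto
    obtain E' where E': "chemical_tree V E'" "num_segments V E' = num_segments V E" "M2 V E < M2 V E'"
      using switch[OF ct ab vy av d2 d3 d4 bv da dv db dy] by blast
    have "(V, E') \<in> CT n k" using E' cV nsk by (simp add: CT_def)
    then have "M2 V E' \<le> M2 V E" using assms(4) by blast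
    then show False using E'(3) by simp
  qed
  show ?thesis
    unfolding is_tree_def S_def[symmetric] ES_def[symmetric] using sgS Sne connS acS by simp
qed


end
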